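(* Let $N$ be a connected component of $\partial\Omega$, use Fermi coordinates $(x',x_{n+1})$ on $\Omega_N=\phi_N(N\times[0,r_{\max,N}))$, in which $p(x,\xi)=|\xi|_g^2=\xi_{n+1}^2+g(x,\xi')$ with $g(x,\cdot)$ a quadratic form in $\xi'$. Fix $\delta>0$ and let $f_\delta\in C^\infty([0,r_{\max,N}])$ satisfy $$\delta\le f_\delta(t)-\sup_{\{(x',\xi'):\,g(t,x',\xi')=1\}}\partial_t g(t,x',\xi')\le 2\delta .$$ Define $\psi_N(x_{n+1})=\int_0^{x_{n+1}}e^{\frac12\int_0^s f_\delta(\tau)d\tau}ds$ and $p_{\psi_N}(x,\xi)=p(x,\xi+i\partial_x\psi_N)$. Then there is $C(\delta)>0$ such that $$\{\operatorname{Re}p_{\psi_N},\operatorname{Im}p_{\psi_N}\}(x,\xi)\ge C(\delta)>0\quad\text{for all }(x,\xi)\in\operatorname{Char}(p_{\psi_N})=\{p_{\psi_N}=0\},\ x\in\Omega_N .$$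
   Context: $(\Omega,g)$ is a compact Riemannian manifold with boundary; $\phi_N(x,r)=\exp_x(-r\nu)$ with $\nu$ the unit exterior normal, and $r_{\max,N}$ is the supremum of $r_0$ for which $\phi_N$ is a diffeomorphism of $N\times[0,r_0)$ onto its image. $\{\cdot,\cdot\}$ is the Poisson bracket on $T^*\Omega_N$. Here $\sup_{\{g(t,x',\xi')=1\}}\partial_tg$ is taken over $x'\in N$ and $\xi'$ with $g(t,x',\xi')=1$. *)

theory Defs
  imports "HOL-Analysis.Analysis"
begin

definition sint :: "real \<Rightarrow> real \<Rightarrow> (real \<Rightarrow> real) \<Rightarrow> real" where
  "sint a b h = (if a \<le> b then integral {a..b} h else - integral {b..a} h)"

definition psiN :: "(real \<Rightarrow> real) \<Rightarrow> real \<Rightarrow> real" where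
  "psiN f t = sint 0 t (\<lambda>s. exp (1/2 * sint 0 s f))"

definition smooth_fun :: "(real \<Rightarrow> real) \<Rightarrow> bool" where
  "smooth_fun f \<longleftrightarrow> (\<forall>k. ((deriv ^^ k) f) differentiable_on UNIV)"

definition quadratic_form :: "(real^'n \<Rightarrow> real) \<Rightarrow> bool" where
  "quadratic_form q \<longleftrightarrow> (\<exists>A::real^'n^'n. \<forall>v. q v = v \<bullet> (A *v v))"

text \<open>Complexification of a quadratic form q evaluated at u + i v:
  q(u) - q(v) + 2 i B(u,v), with B the polarisation of q.\<close>
definition qcomplex :: "('v::real_vector \<Rightarrow> real) \<Rightarrow> 'v \<Rightarrow> 'v \<Rightarrow> complex" where
  "qcomplex q u v = Complex (q u - q v) ((q (u + v) - q (u - v)) / 2)"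

text \<open>Fermi coordinates: x = (x', x_{n+1}), xi = (xi', xi_{n+1}).
  p(x, xi + i eta) = (xi_{n+1} + i eta_{n+1})^2 + g(x_{n+1}, x', xi' + i eta'),
  the (complexified) principal symbol p(x,xi) = xi_{n+1}^2 + g(x,xi').\<close>
definition p_fermi :: "(real \<Rightarrow> real^'n \<Rightarrow> real^'n \<Rightarrow> real) \<Rightarrow> ((real^'n) \<times> real)
    \<Rightarrow> ((real^'n) \<times> real) \<Rightarrow> ((real^'n) \<times> real) \<Rightarrow> complex" where
  "p_fermi g x \<xi> \<eta> = (Complex (snd \<xi>) (snd \<eta>))^2 + qcomplex (g (snd x) (fst x)) (fst \<xi>) (fst \<eta>)"

definition p_psi :: "(real \<Rightarrow> real^'n \<Rightarrow> real^'n \<Rightarrow> real) \<Rightarrow> (real \<Rightarrow> real)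
    \<Rightarrow> ((real^'n) \<times> real) \<Rightarrow> ((real^'n) \<times> real) \<Rightarrow> complex" where
  "p_psi g f x \<xi> = p_fermi g x \<xi> (0, deriv (psiN f) (snd x))"

definition poisson :: "('a::euclidean_space \<Rightarrow> 'a \<Rightarrow> real) \<Rightarrow> ('a \<Rightarrow> 'a \<Rightarrow> real) \<Rightarrow> 'a \<Rightarrow> 'a \<Rightarrow> real" where
  "poisson a b x \<xi> = (\<Sum>e\<in>Basis.
      frechet_derivative (\<lambda>\<eta>. a x \<eta>) (at \<xi>) e * frechet_derivative (\<lambda>y. b y \<xi>) (at x) e
    - frechet_derivative (\<lambda>y. a y \<xi>) (at x) e * frechet_derivative (\<lambda>\<eta>. b x \<eta>) (at \<xi>) e)"

end

theory Submission
  imports Defs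
begin

lemma sint_eq:
  fixes h :: "real \<Rightarrow> real"
  assumes c: "continuous_on UNIV h" and a: "a \<le> 0" "a \<le> u"
  shows "sint 0 u h = integral {a..u} h - integral {a..0} h"
proof (cases "0 \<le> u")
  case True
  have "h integrable_on {a..u}"
    by (rule integrable_continuous_interval, rule continuous_on_subset[OF c]) simp
  then have "integral {a..0} h + integral {0..u} h = integral {a..u} h"
    by (intro Henstock_Kurzweil_Integration.integral_combine) (use True a in auto)
  then show ?thesis using True unfolding sint_def by simp
next
  case False
  have "h integrable_on {a..0}"
    by (rule integrable_continuous_interval, rule continuous_on_subset[OF c]) simp
  then have "integral {a..u} h + integral {u..0} h = integral {a..0} h"
    by (intro Henstock_Kurzweil_Integration.integral_combine) (use False a in auto)
  then show ?thesis using False unfolding sint_def by simp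
qed


lemma sint_deriv:
  fixes h :: "real \<Rightarrow> real"
  assumes c: "continuous_on UNIV h"
  shows "((\<lambda>u. sint 0 u h) has_real_derivative h s) (at s)"
proof -
  define a where "a = - \<bar>s\<bar> - 1"
  define b where "b = \<bar>s\<bar> + 1"
  have sab: "s \<in> {a..b}" unfolding a_def b_def by (simp add: abs_if)
  have "continuous_on {a..b} h" by (rule continuous_on_subset[OF c]) simp
  from integral_has_real_derivative[OF this sab]
  have "((\<lambda>x. integral {a..x} h) has_real_derivative h s) (at s within {a..b})" .
  moreover have "s \<in> interior {a..b}" unfolding interior_atLeastAtMost_real a_def b_def by (simp add: abs_if)
  ultimately have "((\<lambda>x. integral {a..x} h) has_real_derivative h s) (at s)"
    by (simp only: at_within_interior)
  then have d: "((\<lambda>x. integral {a..x} h - integral {a..0} h) has_real_derivative h s) (at s)"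
    by (rule DERIV_diff[where E=0, simplified]) (rule DERIV_const)
  have ev: "eventually (\<lambda>x. x \<in> {a<..}) (nhds s)"
    by (rule eventually_nhds_in_open) (auto simp: a_def)
  have "eventually (\<lambda>x. sint 0 x h = integral {a..x} h - integral {a..0} h) (nhds s)"
    by (rule eventually_mono[OF ev]) (auto simp: a_def intro!: sint_eq[OF c])
  then show ?thesis using d
    by (subst DERIV_cong_ev[where g="\<lambda>x. integral {a..x} h - integral {a..0} h"]) auto
qed



lemma quad_scale:
  assumes "quadratic_form q"
  shows "q (c *\<^sub>R v) = c^2 * q v"
proof -
  obtain A where A: "\<forall>v. q v = v \<bullet> (A *v v)" using assms unfolding quadratic_form_def by blast
  show ?thesis using A by (simp add: matrix_vector_mult_scaleR power2_eq_square)
qed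

lemma quad_zero:
  assumes "quadratic_form q" shows "q 0 = 0"
  using quad_scale[OF assms, of 0 0] by simp

lemma right_deriv_unique:
  fixes h1 h2 :: "real \<Rightarrow> real"
  assumes d1: "(h1 has_real_derivative d1) (at t)" and d2: "(h2 has_real_derivative d2) (at t)"
    and e: "0 < e" and eq: "\<forall>s\<in>{t..<t+e}. h1 s = h2 s"
  shows "d1 = d2"
proof -
  have "((\<lambda>s. h1 s - h2 s) has_real_derivative d1 - d2) (at t)"
    using d1 d2 by (rule DERIV_diff)
  then have "((\<lambda>y. ((h1 y - h2 y) - (h1 t - h2 t)) / (y - t)) \<longlongrightarrow> d1 - d2) (at t)"
    by (simp add: has_field_derivative_iff)
  then have L: "((\<lambda>y. ((h1 y - h2 y) - (h1 t - h2 t)) / (y - t)) \<longlongrightarrow> d1 - d2) (at_right t)"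
    by (rule tendsto_within_subset) auto
  have "eventually (\<lambda>y. ((h1 y - h2 y) - (h1 t - h2 t)) / (y - t) = 0) (at_right t)"
    unfolding eventually_at_right_field
    using e eq by (intro exI[of _ "t+e"]) auto
  then have "((\<lambda>y. ((h1 y - h2 y) - (h1 t - h2 t)) / (y - t)) \<longlongrightarrow> 0) (at_right t)"
    by (rule tendsto_eventually)
  from tendsto_unique[OF _ L this] show ?thesis by simp
qed

lemma partial_deriv:
  fixes G :: "('a::real_normed_vector) \<times> real \<Rightarrow> real"
  assumes "G differentiable (at (x', t))"
  shows "((\<lambda>s. G (x', s)) has_real_derivative deriv (\<lambda>s. G (x', s)) t) (at t)"
proof -
  have P: "(\<lambda>s. (x', s)) differentiable (at t)"
    by (rule differentiableI, rule has_derivative_Pair[OF has_derivative_const has_derivative_ident])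
  have "(G \<circ> (\<lambda>s. (x', s))) differentiable (at t)" by (rule differentiable_chain_at[OF P assms])
  then have "(\<lambda>s. G (x', s)) differentiable (at t)" by (simp add: o_def)
  then show ?thesis by (simp add: DERIV_deriv_iff_real_differentiable)
qed

lemma dir_deriv:
  fixes G :: "('a::real_normed_vector) \<times> real \<Rightarrow> real"
  assumes "G differentiable (at (x', t))"
  shows "((\<lambda>s. G (x', s)) has_real_derivative frechet_derivative G (at (x', t)) (0, 1)) (at t)"
proof -
  let ?L = "frechet_derivative G (at (x', t))"
  have G: "(G has_derivative ?L) (at (x', t))" using assms frechet_derivative_works by blast
  have lin: "linear ?L" using has_derivative_linear[OF G] .
  have "((\<lambda>s. G (x', s)) has_derivative (\<lambda>h. ?L (0, h))) (at t)"
    using has_derivative_compose[OF has_derivative_Pair[OF has_derivative_const has_derivative_ident] G]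
    by simp
  moreover have "(\<lambda>h. ?L (0, h)) = (\<lambda>h. ?L (0, 1) * h)"
  proof
    fix h :: real
    have "?L (0, h) = ?L (h *\<^sub>R (0, 1))" by simp
    also have "\<dots> = h * ?L (0, 1)" by (simp only: linear_scale[OF lin] real_scaleR_def)
    finally show "?L (0, h) = ?L (0, 1) * h" by simp
  qed
  ultimately show ?thesis by (simp add: has_field_derivative_def)
qed

lemma basis_sum:
  fixes L :: "'a::euclidean_space \<times> real \<Rightarrow> real"
  assumes "linear L"
  shows "(\<Sum>e\<in>Basis. L e * snd e) = L (0, 1)"
proof -
  have "L (0, 1) = L (\<Sum>b\<in>Basis. ((0::'a, 1::real) \<bullet> b) *\<^sub>R b)"
    by (simp only: euclidean_representation)
  also have "\<dots> = (\<Sum>b\<in>Basis. ((0::'a, 1::real) \<bullet> b) * L b)"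
    using assms by (simp add: linear_sum linear_scale)
  also have "\<dots> = (\<Sum>b\<in>Basis. L b * snd b)"
    by (simp add: inner_prod_def mult.commute)
  finally show ?thesis by simp
qed




theorem mainTheorem4:
  fixes f :: "real \<Rightarrow> real" and \<delta> r :: real
  assumes "0 < \<delta>" and "0 < r" and "smooth_fun f"
  shows "\<exists>C>0. \<forall>(U :: (real^'n) set) (g :: real \<Rightarrow> real^'n \<Rightarrow> real^'n \<Rightarrow> real) (S :: real \<Rightarrow> real).
    (open U
     \<and> (\<forall>t\<in>{0..<r}. \<forall>x'\<in>U. quadratic_form (g t x') \<and> (\<forall>v. v \<noteq> 0 \<longrightarrow> 0 < g t x' v))
     \<and> (\<forall>t\<in>{0..<r}. \<forall>x'\<in>U. \<forall>\<xi>'. (\<lambda>y. g (snd y) (fst y) \<xi>') differentiable (at (x', t)))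
     \<and> (\<forall>t\<in>{0..<r}. \<forall>x'\<in>U. \<forall>\<xi>'. g t x' \<xi>' = 1 \<longrightarrow> deriv (\<lambda>s. g s x' \<xi>') t \<le> S t)
     \<and> (\<forall>t\<in>{0..<r}. \<delta> \<le> f t - S t \<and> f t - S t \<le> 2 * \<delta>))
    \<longrightarrow> (\<forall>x'\<in>U. \<forall>t\<in>{0..<r}. \<forall>\<xi>. p_psi g f (x', t) \<xi> = 0 \<longrightarrow>
          C \<le> poisson (\<lambda>x \<xi>. Re (p_psi g f x \<xi>)) (\<lambda>x \<xi>. Im (p_psi g f x \<xi>)) (x', t) \<xi>)"
proof -
  have "((deriv ^^ 0) f) differentiable_on UNIV" using assms(3) unfolding smooth_fun_def by blast
  then have cf: "continuous_on UNIV f" by (simp add: differentiable_imp_continuous_on)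
  define F where "F = (\<lambda>s. sint 0 s f)"
  have dF: "\<And>s. (F has_real_derivative f s) (at s)" unfolding F_def by (rule sint_deriv[OF cf])
  define \<phi> where "\<phi> = (\<lambda>s. exp (1/2 * F s))"
  have d\<phi>: "\<And>s. (\<phi> has_real_derivative \<phi> s * (f s / 2)) (at s)"
  proof -
    fix s
    have "((\<lambda>s. exp (1/2 * F s)) has_real_derivative exp (1/2 * F s) * (1/2 * f s)) (at s)"
      by (rule DERIV_chain2[OF DERIV_exp]) (rule DERIV_cmult[OF dF])
    then show "(\<phi> has_real_derivative \<phi> s * (f s / 2)) (at s)" unfolding \<phi>_def by simp
  qed
  have c\<phi>: "continuous_on UNIV \<phi>"
    using d\<phi> by (meson DERIV_isCont continuous_at_imp_continuous_on)
  have dpsi: "\<And>s. (psiN f has_real_derivative \<phi> s) (at s)"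
    unfolding psiN_def using sint_deriv[OF c\<phi>] unfolding \<phi>_def F_def by simp
  have dpsi_eq: "deriv (psiN f) = \<phi>"
    using dpsi by (auto intro!: DERIV_imp_deriv)
  have \<phi>pos: "\<And>s. 0 < \<phi> s" unfolding \<phi>_def by simp
  have "continuous_on {0..r} F"
    using dF by (meson DERIV_isCont continuous_at_imp_continuous_on)
  then have "bounded (F ` {0..r})" by (intro compact_imp_bounded compact_continuous_image) auto
  then obtain B where B: "\<And>t. t \<in> {0..r} \<Longrightarrow> \<bar>F t\<bar> \<le> B"
    unfolding bounded_iff real_norm_def by (meson image_eqI)
  define m where "m = exp (- B / 2)"
  have mpos: "0 < m" unfolding m_def by simp
  have \<phi>m: "\<And>t. t \<in> {0..<r} \<Longrightarrow> m \<le> \<phi> t"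
  proof -
    fix t assume "t \<in> {0..<r}"
    then have "\<bar>F t\<bar> \<le> B" using B by auto
    then show "m \<le> \<phi> t" unfolding m_def \<phi>_def by simp
  qed
  have reP: "\<And>g y \<eta>. Re (p_psi g f y \<eta>) = (snd \<eta>)^2 - (\<phi> (snd y))^2 + g (snd y) (fst y) (fst \<eta>) - g (snd y) (fst y) 0"
    unfolding p_psi_def p_fermi_def qcomplex_def dpsi_eq by (simp add: power2_eq_square)
  have imP: "\<And>g y \<eta>. Im (p_psi g f y \<eta>) = 2 * snd \<eta> * \<phi> (snd y)"
    unfolding p_psi_def p_fermi_def qcomplex_def dpsi_eq by (simp add: power2_eq_square)
  show ?thesis
  proof (intro exI[of _ "2 * \<delta> * m^3"] conjI allI impI ballI)
    show "0 < 2 * \<delta> * m^3" using assms(1) mpos by simp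
  next
    fix U :: "(real^'n) set" and g :: "real \<Rightarrow> real^'n \<Rightarrow> real^'n \<Rightarrow> real" and S :: "real \<Rightarrow> real"
      and x' t and \<xi> :: "(real^'n) \<times> real"
    assume H: "open U
     \<and> (\<forall>t\<in>{0..<r}. \<forall>x'\<in>U. quadratic_form (g t x') \<and> (\<forall>v. v \<noteq> 0 \<longrightarrow> 0 < g t x' v))
     \<and> (\<forall>t\<in>{0..<r}. \<forall>x'\<in>U. \<forall>\<xi>'. (\<lambda>y. g (snd y) (fst y) \<xi>') differentiable (at (x', t)))
     \<and> (\<forall>t\<in>{0..<r}. \<forall>x'\<in>U. \<forall>\<xi>'. g t x' \<xi>' = 1 \<longrightarrow> deriv (\<lambda>s. g s x' \<xi>') t \<le> S t)
     \<and> (\<forall>t\<in>{0..<r}. \<delta> \<le> f t - S t \<and> f t - S t \<le> 2 * \<delta>)"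
      and x': "x' \<in> U" and t: "t \<in> {0..<r}" and p0: "p_psi g f (x', t) \<xi> = 0"
    obtain \<xi>' \<tau> where \<xi>: "\<xi> = (\<xi>', \<tau>)" by (cases \<xi>)
    have quad: "\<And>s. s \<in> {0..<r} \<Longrightarrow> quadratic_form (g s x')" using H x' by blast
    have diff: "\<And>v. (\<lambda>y. g (snd y) (fst y) v) differentiable (at (x', t))" using H x' t by blast
    have Sb: "\<And>v. g t x' v = 1 \<Longrightarrow> deriv (\<lambda>s. g s x' v) t \<le> S t" using H x' t by blast
    have fS: "\<delta> \<le> f t - S t" using H t by blast
    have "Im (p_psi g f (x', t) \<xi>) = 0" using p0 by simp
    then have \<tau>0: "\<tau> = 0" using \<phi>pos[of t] by (simp add: imP \<xi>)
    have "Re (p_psi g f (x', t) \<xi>) = 0" using p0 by simp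
    then have g\<xi>: "g t x' \<xi>' = (\<phi> t)^2" using quad_zero[OF quad[OF t]] by (simp add: reP \<xi> \<tau>0)
    define Ra where "Ra = (\<lambda>y. Re (p_psi g f y \<xi>))"
    define L where "L = frechet_derivative Ra (at (x', t))"
    have Im0: "(\<lambda>y. Im (p_psi g f y \<xi>)) = (\<lambda>y. 0)" by (simp add: imP \<xi> \<tau>0)
    have DB2: "frechet_derivative (\<lambda>y. Im (p_psi g f y \<xi>)) (at (x', t)) = (\<lambda>h. 0)"
      unfolding Im0 by (rule frechet_derivative_at[symmetric]) (rule has_derivative_const)
    have Im1: "(\<lambda>\<eta>. Im (p_psi g f (x', t) \<eta>)) = (\<lambda>\<eta>. 2 * snd \<eta> * \<phi> t)" by (simp add: imP)
    have DB1: "frechet_derivative (\<lambda>\<eta>. Im (p_psi g f (x', t) \<eta>)) (at \<xi>) = (\<lambda>e. 2 * snd e * \<phi> t)"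
      unfolding Im1 by (rule frechet_derivative_at[symmetric]) (auto intro!: derivative_eq_intros)
    have Ra_eq: "Ra = (\<lambda>y. \<tau>^2 - (\<phi> (snd y))^2 + g (snd y) (fst y) \<xi>' - g (snd y) (fst y) 0)"
      unfolding Ra_def by (simp add: reP \<xi>)
    have d\<phi>snd: "((\<lambda>y::(real^'n)\<times>real. \<phi> (snd y)) has_derivative (\<lambda>e. \<phi> t * (f t / 2) * snd e)) (at (x', t))"
    proof -
      have h: "(\<phi> has_derivative (*) (\<phi> t * (f t / 2))) (at (snd (x', t)))"
        using d\<phi>[of t] by (simp add: has_field_derivative_def)
      show ?thesis
        using has_derivative_compose[OF has_derivative_snd[OF has_derivative_ident, of "at (x',t)"] h]
        by (simp add: mult.commute)
    qed
    have "Ra differentiable (at (x', t))"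
      unfolding Ra_eq
      by (intro differentiable_diff differentiable_add differentiable_power differentiable_const diff)
         (use d\<phi>snd differentiableI in blast)
    then have RaL: "(Ra has_derivative L) (at (x', t))" unfolding L_def using frechet_derivative_works by blast
    have linL: "linear L" using has_derivative_linear[OF RaL] .
    have "poisson (\<lambda>x \<xi>. Re (p_psi g f x \<xi>)) (\<lambda>x \<xi>. Im (p_psi g f x \<xi>)) (x', t) \<xi>
        = (\<Sum>e\<in>Basis. - (2 * \<phi> t) * (L e * snd e))"
      unfolding poisson_def DB2 DB1 L_def Ra_def by (simp add: algebra_simps)
    also have "\<dots> = - (2 * \<phi> t) * L (0, 1)"
      using basis_sum[OF linL] by (simp add: sum_negf sum_distrib_left[symmetric])
    finally have P: "poisson (\<lambda>x \<xi>. Re (p_psi g f x \<xi>)) (\<lambda>x \<xi>. Im (p_psi g f x \<xi>)) (x', t) \<xi>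
        = - (2 * \<phi> t) * L (0, 1)" .
    define d where "d = (\<lambda>v. deriv (\<lambda>s. g s x' v) t)"
    have dd: "\<And>v. ((\<lambda>s. g s x' v) has_real_derivative d v) (at t)"
      unfolding d_def using partial_deriv[OF diff] by simp
    have L1: "((\<lambda>s. Ra (x', s)) has_real_derivative L (0, 1)) (at t)"
      unfolding L_def by (rule dir_deriv) (use RaL differentiableI in blast)
    have L2: "((\<lambda>s. Ra (x', s)) has_real_derivative 0 - 2 * \<phi> t * (\<phi> t * (f t / 2)) + d \<xi>' - d 0) (at t)"
      unfolding Ra_eq
      by (auto intro!: derivative_eq_intros dd d\<phi>)
    have Leq: "L (0, 1) = - 2 * \<phi> t * (\<phi> t * (f t / 2)) + d \<xi>' - d 0"
      using DERIV_unique[OF L1 L2] by simp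
    have tr: "0 < r - t" "\<And>s. s \<in> {t..<t + (r - t)} \<Longrightarrow> s \<in> {0..<r}" using t by auto
    have d0: "d 0 = 0"
      by (rule right_deriv_unique[OF dd[of 0] DERIV_const tr(1)]) (use quad_zero quad tr(2) in blast)
    define w where "w = (1 / \<phi> t) *\<^sub>R \<xi>'"
    have gw: "g t x' w = 1"
      unfolding w_def using quad_scale[OF quad[OF t]] g\<xi> \<phi>pos[of t] by (simp add: power2_eq_square)
    have dw: "d w \<le> S t" unfolding d_def using Sb[OF gw] .
    have "d \<xi>' = (\<phi> t)^2 * d w"
    proof (rule right_deriv_unique[OF dd[of \<xi>'] DERIV_cmult[OF dd[of w]] tr(1)], intro ballI)
      fix s assume "s \<in> {t..<t + (r - t)}"
      then have "s \<in> {0..<r}" by (rule tr(2))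
      then show "g s x' \<xi>' = (\<phi> t)^2 * g s x' w"
        unfolding w_def using quad_scale[OF quad] \<phi>pos[of t] by (simp add: power2_eq_square)
    qed
    then have Lval: "L (0, 1) = (\<phi> t)^2 * d w - (\<phi> t)^2 * f t"
      using Leq d0 by (simp add: power2_eq_square)
    have br: "poisson (\<lambda>x \<xi>. Re (p_psi g f x \<xi>)) (\<lambda>x \<xi>. Im (p_psi g f x \<xi>)) (x', t) \<xi>
        = 2 * (\<phi> t)^3 * (f t - d w)"
      unfolding P Lval by (simp add: algebra_simps power2_eq_square power3_eq_cube)
    have m3: "m^3 \<le> (\<phi> t)^3" using \<phi>m[OF t] mpos by (simp add: power_mono)
    have "\<delta> \<le> f t - d w" using fS dw by simp
    then have "2 * \<delta> * m^3 \<le> 2 * (f t - d w) * (\<phi> t)^3"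
      using m3 assms(1) mpos by (intro mult_mono) auto
    then show "2 * \<delta> * m^3 \<le> poisson (\<lambda>x \<xi>. Re (p_psi g f x \<xi>)) (\<lambda>x \<xi>. Im (p_psi g f x \<xi>)) (x', t) \<xi>"
      unfolding br by (simp add: algebra_simps)
  qed
qed


end
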